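(* Let $L'$ be a finite $0$-distributive lattice with exactly $n$ atoms. Then there exists a blow-up $L^B$ of the Boolean lattice $L\cong\mathbf{2}^n$ such that the zero-divisor graphs $G(L')$ and $G(L^B)$ are isomorphic (indeed the chain replacing an element of $L$ has as many elements as the corresponding $\sim$-class of $L'$).
   Context: A lattice $M$ with $0$ is $0$-distributive if $a\wedge b=0$ and $a\wedge c=0$ imply $a\wedge(b\vee c)=0$. For a lattice $M$ with $0$, $a^{\perp}=\{b: a\wedge b=0\}$, $x\sim y$ iff $x^\perp=y^\perp$, $[x]$ is the class of $x$, and $[M]$ is the set of classes ordered by $[a]\le[b]$ iff $b^{\perp}\subseteq a^{\perp}$. The zero-divisor graph $G(M)$ has as vertices the nonzero $a\in M$ with $a\wedge b=0$ for some nonzero $b$, distinct $a,b$ adjacent iff $a\wedge b=0$. Blow-up: for $L\cong\mathbf{2}^n$, replace each $a\in L\setminus\{0,1\}$ by a finite chain $C_a$: $a=a^1\lessdot\cdots\lessdot a^{k_a}$, keep $0,1$; elements in one chain are ordered along it, and for $u\in C_a,v\in C_b$ with $a\ne b$ ($C_0=\{0\},C_1=\{1\}$), $u\le v$ iff $a<b$ in $L$. *)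

theory Defs
  imports Main
begin

definition zero_distributive :: "'a::bounded_lattice itself \<Rightarrow> bool" where
  "zero_distributive _ \<longleftrightarrow>
     (\<forall>a b c::'a. inf a b = bot \<and> inf a c = bot \<longrightarrow> inf a (sup b c) = bot)"

definition is_atom :: "'a::bounded_lattice \<Rightarrow> bool" where
  "is_atom a \<longleftrightarrow> a \<noteq> bot \<and> (\<forall>b. b \<le> a \<longrightarrow> b = bot \<or> b = a)"

definition perp :: "'a::bounded_lattice \<Rightarrow> 'a set" where
  "perp a = {b. inf a b = bot}"

definition perp_equiv :: "'a::bounded_lattice \<Rightarrow> 'a \<Rightarrow> bool" where
  "perp_equiv x y \<longleftrightarrow> perp x = perp y"

(* Zero-divisor graph of a structure given by a carrier S, a zero element z, and the
   predicate zm a b meaning "a \<and> b = 0". *)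
definition zd_vertices :: "'a set \<Rightarrow> 'a \<Rightarrow> ('a \<Rightarrow> 'a \<Rightarrow> bool) \<Rightarrow> 'a set" where
  "zd_vertices S z zm = {a \<in> S. a \<noteq> z \<and> (\<exists>b\<in>S. b \<noteq> z \<and> zm a b)}"

definition zd_adj :: "('a \<Rightarrow> 'a \<Rightarrow> bool) \<Rightarrow> 'a \<Rightarrow> 'a \<Rightarrow> bool" where
  "zd_adj zm a b \<longleftrightarrow> a \<noteq> b \<and> zm a b"

definition zd_graph_iso ::
  "'a set \<Rightarrow> 'a \<Rightarrow> ('a \<Rightarrow> 'a \<Rightarrow> bool) \<Rightarrow> 'b set \<Rightarrow> 'b \<Rightarrow> ('b \<Rightarrow> 'b \<Rightarrow> bool) \<Rightarrow> bool" where
  "zd_graph_iso S1 z1 zm1 S2 z2 zm2 \<longleftrightarrow>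
     (\<exists>f. bij_betw f (zd_vertices S1 z1 zm1) (zd_vertices S2 z2 zm2) \<and>
          (\<forall>a\<in>zd_vertices S1 z1 zm1. \<forall>b\<in>zd_vertices S1 z1 zm1.
              zd_adj zm1 a b \<longleftrightarrow> zd_adj zm2 (f a) (f b)))"

definition lat_zm :: "'a::bounded_lattice \<Rightarrow> 'a \<Rightarrow> bool" where
  "lat_zm a b \<longleftrightarrow> inf a b = bot"

(* Blow-up of the Boolean lattice 2^n, realized as subsets of {..<n}.
   The element a \<subseteq> {..<n}, a \<noteq> {}, a \<noteq> {..<n}, is replaced by the chain
   (a,1) < (a,2) < ... < (a, k a); the bottom {} and top {..<n} are kept as ({},1), ({..<n},1). *)
definition blowup_carrier :: "nat \<Rightarrow> (nat set \<Rightarrow> nat) \<Rightarrow> (nat set \<times> nat) set" where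
  "blowup_carrier n k = {(a,i). a \<subseteq> {..<n} \<and>
      (if a = {} \<or> a = {..<n} then i = 1 else 1 \<le> i \<and> i \<le> k a)}"

definition blowup_le :: "nat set \<times> nat \<Rightarrow> nat set \<times> nat \<Rightarrow> bool" where
  "blowup_le u v \<longleftrightarrow> (fst u = fst v \<and> snd u \<le> snd v) \<or> fst u \<subset> fst v"

definition blowup_bot :: "nat set \<times> nat" where
  "blowup_bot = ({}, 1)"

definition blowup_zm :: "nat \<Rightarrow> (nat set \<Rightarrow> nat) \<Rightarrow> nat set \<times> nat \<Rightarrow> nat set \<times> nat \<Rightarrow> bool" where
  "blowup_zm n k u v \<longleftrightarrow>
     (\<forall>w\<in>blowup_carrier n k. blowup_le w u \<and> blowup_le w v \<longrightarrow> w = blowup_bot)"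

end

theory Submission imports Defs begin

lemma atom_below:
  fixes x :: "'a::{finite,bounded_lattice}"
  assumes "x \<noteq> bot" shows "\<exists>p. is_atom p \<and> p \<le> x"
proof -
  let ?S = "{y. y \<noteq> bot \<and> y \<le> x}"
  have "finite ?S" by simp
  moreover have "x \<in> ?S" using assms by simp
  ultimately obtain m where m: "m \<in> ?S" "\<forall>b\<in>?S. b \<le> m \<longrightarrow> m = b"
    using finite_has_minimal2[of ?S x] by blast
  have "is_atom m" unfolding is_atom_def
  proof (intro conjI allI impI)
    show "m \<noteq> bot" using m(1) by simp
  next
    fix b assume b: "b \<le> m"
    show "b = bot \<or> b = m"
    proof (cases "b = bot")
      case False
      have "b \<le> x" using b m(1) by (blast intro: order_trans)
      hence "b \<in> ?S" using False by simp
      thus ?thesis using m(2) b by blast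
    qed simp
  qed
  thus ?thesis using m(1) by blast
qed

lemma atom_inf:
  fixes p :: "'a::bounded_lattice"
  assumes "is_atom p" shows "inf p x = bot \<or> p \<le> x"
  using assms unfolding is_atom_def by (metis inf.cobounded1 inf.absorb_iff1)

lemma inf_bot_iff:
  fixes a :: "'a::{finite,bounded_lattice}"
  shows "inf a b = bot \<longleftrightarrow> (\<forall>p. is_atom p \<and> p \<le> a \<longrightarrow> \<not> p \<le> b)"
proof
  assume h: "inf a b = bot"
  show "\<forall>p. is_atom p \<and> p \<le> a \<longrightarrow> \<not> p \<le> b"
  proof (intro allI impI)
    fix p assume "is_atom p \<and> p \<le> a"
    thus "\<not> p \<le> b" using h unfolding is_atom_def by (metis inf.boundedI le_bot)
  qed
next
  assume h: "\<forall>p. is_atom p \<and> p \<le> a \<longrightarrow> \<not> p \<le> b"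
  show "inf a b = bot"
  proof (rule ccontr)
    assume "inf a b \<noteq> bot"
    then obtain p where "is_atom p" "p \<le> inf a b" using atom_below by blast
    thus False using h by auto
  qed
qed

lemma perp_sub:
  fixes x y :: "'a::{finite,bounded_lattice}"
  shows "perp y \<subseteq> perp x \<longleftrightarrow> (\<forall>p. is_atom p \<and> p \<le> x \<longrightarrow> p \<le> y)"
proof
  assume h: "perp y \<subseteq> perp x"
  show "\<forall>p. is_atom p \<and> p \<le> x \<longrightarrow> p \<le> y"
  proof (intro allI impI)
    fix p assume p: "is_atom p \<and> p \<le> x"
    show "p \<le> y"
    proof (rule ccontr)
      assume "\<not> p \<le> y"
      hence "inf p y = bot" using atom_inf p by blast
      hence "p \<in> perp y" unfolding perp_def by (simp add: inf_commute)
      hence "inf x p = bot" using h unfolding perp_def by blast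
      hence "p = bot" using p by (simp add: inf.absorb2)
      thus False using p unfolding is_atom_def by simp
    qed
  qed
next
  assume h: "\<forall>p. is_atom p \<and> p \<le> x \<longrightarrow> p \<le> y"
  show "perp y \<subseteq> perp x"
  proof
    fix b assume "b \<in> perp y"
    hence "inf y b = bot" unfolding perp_def by simp
    hence "\<forall>p. is_atom p \<and> p \<le> y \<longrightarrow> \<not> p \<le> b" using inf_bot_iff by blast
    hence "\<forall>p. is_atom p \<and> p \<le> x \<longrightarrow> \<not> p \<le> b" using h by blast
    hence "inf x b = bot" using inf_bot_iff by blast
    thus "b \<in> perp x" unfolding perp_def by simp
  qed
qed

lemma exists_join:
  fixes T :: "'a::{finite,bounded_lattice} set"
  assumes zd: "zero_distributive TYPE('a)" and "finite T" and "T \<subseteq> {p. is_atom p}"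
  shows "\<exists>x::'a. \<forall>p. is_atom p \<longrightarrow> (p \<le> x \<longleftrightarrow> p \<in> T)"
  using assms(2,3)
proof (induction T rule: finite_induct)
  case empty
  show ?case by (rule exI[of _ bot]) (auto simp: is_atom_def bot_unique)
next
  case (insert q T)
  then obtain x where x: "\<forall>p. is_atom p \<longrightarrow> (p \<le> x \<longleftrightarrow> p \<in> T)" by auto
  have q: "is_atom q" using insert by auto
  show ?case
  proof (rule exI[of _ "sup x q"], intro allI impI)
    fix p :: 'a assume p: "is_atom p"
    show "p \<le> sup x q \<longleftrightarrow> p \<in> insert q T"
    proof
      assume "p \<in> insert q T" thus "p \<le> sup x q" using x p by (auto intro: le_supI1 le_supI2)
    next
      assume le: "p \<le> sup x q"
      show "p \<in> insert q T"
      proof (rule ccontr)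
        assume nin: "p \<notin> insert q T"
        have 1: "inf p x = bot" using atom_inf[OF p, of x] x p nin by auto
        have 2: "inf p q = bot"
        proof -
          have "inf p q = bot \<or> p \<le> q" using atom_inf[OF p] by blast
          moreover have "p \<le> q \<Longrightarrow> p = q" using q p unfolding is_atom_def by blast
          ultimately show ?thesis using nin by auto
        qed
        have "inf p (sup x q) = bot" using zd 1 2 unfolding zero_distributive_def by blast
        hence "p = bot" using le by (simp add: inf.absorb1)
        thus False using p unfolding is_atom_def by simp
      qed
    qed
  qed
qed

lemma inj_on_image_subset_iff':
  "inj_on f C \<Longrightarrow> X \<subseteq> C \<Longrightarrow> Y \<subseteq> C \<Longrightarrow> f ` X \<subseteq> f ` Y \<longleftrightarrow> X \<subseteq> Y"
  unfolding inj_on_def by blast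

theorem mainTheorem4:
  fixes n :: nat
  assumes "zero_distributive TYPE('a::{finite, bounded_lattice})"
      and "card {a::'a. is_atom a} = n"
  shows "\<exists>k :: nat set \<Rightarrow> nat.
           (\<forall>a. a \<subseteq> {..<n} \<and> a \<noteq> {} \<and> a \<noteq> {..<n} \<longrightarrow> 1 \<le> k a) \<and>
           (\<exists>\<phi> :: 'a \<Rightarrow> nat set.
              (\<forall>x y. \<phi> x = \<phi> y \<longleftrightarrow> perp_equiv x y) \<and>
              \<phi> ` UNIV = Pow {..<n} \<and>
              (\<forall>x y. \<phi> x \<subseteq> \<phi> y \<longleftrightarrow> perp y \<subseteq> perp x) \<and>
              (\<forall>x. \<phi> x \<noteq> {} \<and> \<phi> x \<noteq> {..<n} \<longrightarrow> k (\<phi> x) = card {y. perp_equiv y x})) \<and>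
           zd_graph_iso (UNIV :: 'a set) bot lat_zm
                        (blowup_carrier n k) blowup_bot (blowup_zm n k)"
proof -
  define A where "A = {a::'a. is_atom a}"
  have finA: "finite A" by simp
  obtain e where e: "bij_betw e A {..<n}"
    using finite_same_card_bij[of A "{..<n}"] assms(2) A_def by auto
  have inj: "inj_on e A" and eA: "e ` A = {..<n}" using e unfolding bij_betw_def by auto
  define At where "At x = {p. is_atom p \<and> p \<le> x}" for x :: 'a
  have AtA: "At x \<subseteq> A" for x by (auto simp: At_def A_def)
  define \<phi> where "\<phi> x = e ` At x" for x
  have phisub: "\<phi> x \<subseteq> \<phi> y \<longleftrightarrow> At x \<subseteq> At y" for x y
    unfolding \<phi>_def using inj_on_image_subset_iff'[OF inj AtA AtA] .
  have perpsub: "perp y \<subseteq> perp x \<longleftrightarrow> At x \<subseteq> At y" for x y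
    using perp_sub[of y x] unfolding At_def by blast
  have phiperp: "\<phi> x \<subseteq> \<phi> y \<longleftrightarrow> perp y \<subseteq> perp x" for x y
    using phisub perpsub by blast
  have phieq: "\<phi> x = \<phi> y \<longleftrightarrow> perp_equiv x y" for x y
  proof -
    have "\<phi> x = \<phi> y \<longleftrightarrow> \<phi> x \<subseteq> \<phi> y \<and> \<phi> y \<subseteq> \<phi> x" by (rule set_eq_subset)
    also have "\<dots> \<longleftrightarrow> perp y \<subseteq> perp x \<and> perp x \<subseteq> perp y" using phiperp[of x y] phiperp[of y x] by simp
    also have "\<dots> \<longleftrightarrow> perp x = perp y" by blast
    finally show ?thesis unfolding perp_equiv_def .
  qed
  have phiimg: "range \<phi> = Pow {..<n}"
  proof
    show "range \<phi> \<subseteq> Pow {..<n}"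
    proof
      fix S assume "S \<in> range \<phi>"
      then obtain x where "S = \<phi> x" by blast
      hence "S = e ` At x" unfolding \<phi>_def by simp
      moreover have "e ` At x \<subseteq> e ` A" using AtA by (rule image_mono)
      ultimately show "S \<in> Pow {..<n}" using eA by simp
    qed
  next
    show "Pow {..<n} \<subseteq> range \<phi>"
    proof
      fix S assume "S \<in> Pow {..<n}"
      hence S: "S \<subseteq> {..<n}" by simp
      define T where "T = A \<inter> e -` S"
      have "finite T" by simp
      have Tat: "T \<subseteq> {p. is_atom p}" unfolding T_def A_def by blast
      obtain x :: 'a where x: "\<forall>p. is_atom p \<longrightarrow> (p \<le> x \<longleftrightarrow> p \<in> T)"
        using exists_join[OF assms(1) \<open>finite T\<close> Tat] by blast
      have "At x = T"
      proof
        show "At x \<subseteq> T" using x unfolding At_def by blast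
        show "T \<subseteq> At x" using x Tat unfolding At_def by blast
      qed
      moreover have "e ` T = S"
      proof
        show "e ` T \<subseteq> S" unfolding T_def by blast
        show "S \<subseteq> e ` T"
        proof
          fix s assume "s \<in> S"
          hence "s \<in> e ` A" using S eA by blast
          then obtain p where "p \<in> A" "s = e p" by blast
          thus "s \<in> e ` T" unfolding T_def using \<open>s \<in> S\<close> by blast
        qed
      qed
      ultimately have "\<phi> x = S" unfolding \<phi>_def by simp
      thus "S \<in> range \<phi>" by blast
    qed
  qed
  define k where "k a = card {y. \<phi> y = a}" for a
  have k1: "1 \<le> k a" if "a \<subseteq> {..<n}" for a
  proof -
    have "a \<in> range \<phi>" using phiimg that by blast
    hence "{y. \<phi> y = a} \<noteq> {}" by blast
    thus ?thesis unfolding k_def by (simp add: Suc_le_eq card_gt_0_iff)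
  qed
  have kcard: "k (\<phi> x) = card {y. perp_equiv y x}" for x
  proof -
    have "{y. \<phi> y = \<phi> x} = {y. perp_equiv y x}" using phieq by blast
    thus ?thesis unfolding k_def by simp
  qed
  have bot_iff: "x = bot \<longleftrightarrow> \<phi> x = {}" for x
  proof
    assume "x = bot" thus "\<phi> x = {}" unfolding \<phi>_def At_def is_atom_def by (auto simp: bot_unique)
  next
    assume "\<phi> x = {}" hence "At x = {}" unfolding \<phi>_def by simp
    thus "x = bot" using atom_below[of x] unfolding At_def by blast
  qed
  have top_iff: "\<phi> x = {..<n} \<longleftrightarrow> At x = A" for x
    unfolding \<phi>_def eA[symmetric] using inj_on_image_eq_iff[OF inj AtA] by blast
  have zmL: "lat_zm x y \<longleftrightarrow> \<phi> x \<inter> \<phi> y = {}" for x y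
  proof -
    have "lat_zm x y \<longleftrightarrow> At x \<inter> At y = {}"
      unfolding lat_zm_def inf_bot_iff[of x y] At_def by blast
    also have "\<dots> \<longleftrightarrow> e ` (At x \<inter> At y) = {}" by simp
    also have "\<dots> \<longleftrightarrow> \<phi> x \<inter> \<phi> y = {}"
      unfolding \<phi>_def using inj_on_image_Int[OF inj AtA AtA] by simp
    finally show ?thesis .
  qed
  have ex_iff: "(\<exists>b. b \<noteq> bot \<and> inf x b = bot) \<longleftrightarrow> At x \<noteq> A" for x
  proof
    assume "\<exists>b. b \<noteq> bot \<and> inf x b = bot"
    then obtain b where b: "b \<noteq> bot" "inf x b = bot" by blast
    obtain p where p: "is_atom p" "p \<le> b" using atom_below[OF b(1)] by blast
    have "\<not> p \<le> x" using b(2) p inf_bot_iff[of x b] by blast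
    thus "At x \<noteq> A" using p unfolding At_def A_def by blast
  next
    assume "At x \<noteq> A"
    then obtain p where p: "is_atom p" "\<not> p \<le> x" using AtA unfolding At_def A_def by blast
    have "inf p x = bot" using atom_inf[OF p(1)] p(2) by blast
    moreover have "p \<noteq> bot" using p(1) unfolding is_atom_def by blast
    ultimately show "\<exists>b. b \<noteq> bot \<and> inf x b = bot" by (metis inf_commute)
  qed
  have VL: "zd_vertices UNIV bot lat_zm = {x. \<phi> x \<noteq> {} \<and> \<phi> x \<noteq> {..<n}}"
  proof -
    have "x \<in> zd_vertices UNIV bot lat_zm \<longleftrightarrow> \<phi> x \<noteq> {} \<and> \<phi> x \<noteq> {..<n}" for x
    proof -
      have "x \<in> zd_vertices UNIV bot lat_zm \<longleftrightarrow> x \<noteq> bot \<and> (\<exists>b. b \<noteq> bot \<and> inf x b = bot)"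
        unfolding zd_vertices_def lat_zm_def by blast
      thus ?thesis using ex_iff[of x] bot_iff[of x] top_iff[of x] by blast
    qed
    thus ?thesis by blast
  qed
  define C where "C = blowup_carrier n k"
  have carr: "(a,i) \<in> C \<longleftrightarrow> a \<subseteq> {..<n} \<and>
      (if a = {} \<or> a = {..<n} then i = 1 else 1 \<le> i \<and> i \<le> k a)" for a i
    by (simp add: C_def blowup_carrier_def)
  have zmB: "blowup_zm n k u v \<longleftrightarrow> fst u \<inter> fst v = {}" if u: "u \<in> C" and v: "v \<in> C" for u v
  proof -
    obtain a i where ai: "u = (a,i)" by (cases u)
    obtain b j where bj: "v = (b,j)" by (cases v)
    have a: "a \<subseteq> {..<n}" "1 \<le> i" using u ai carr by (auto split: if_splits)
    have b: "b \<subseteq> {..<n}" "1 \<le> j" using v bj carr by (auto split: if_splits)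
    show ?thesis
    proof
      assume zm: "blowup_zm n k u v"
      show "fst u \<inter> fst v = {}"
      proof (rule ccontr)
        assume ne: "fst u \<inter> fst v \<noteq> {}"
        have wC: "(a \<inter> b, 1) \<in> C" using carr[of "a \<inter> b" 1] k1[of "a \<inter> b"] a by auto
        have "blowup_le (a \<inter> b, 1) u" using a ai unfolding blowup_le_def by auto
        moreover have "blowup_le (a \<inter> b, 1) v" using b bj unfolding blowup_le_def by auto
        ultimately have "(a \<inter> b, 1) = blowup_bot" using zm wC unfolding blowup_zm_def C_def by blast
        thus False using ne ai bj unfolding blowup_bot_def by simp
      qed
    next
      assume dj: "fst u \<inter> fst v = {}"
      show "blowup_zm n k u v"
        unfolding blowup_zm_def
      proof (intro ballI impI)
        fix w assume wC: "w \<in> blowup_carrier n k" and le: "blowup_le w u \<and> blowup_le w v"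
        obtain c l where cl: "w = (c,l)" by (cases w)
        have "c \<subseteq> a" "c \<subseteq> b" using le cl ai bj unfolding blowup_le_def by auto
        hence "c = {}" using dj ai bj by auto
        hence "l = 1" using wC cl carr C_def by auto
        thus "w = blowup_bot" using cl \<open>c = {}\<close> unfolding blowup_bot_def by simp
      qed
    qed
  qed
  define VB where "VB = {(a,i). a \<subseteq> {..<n} \<and> a \<noteq> {} \<and> a \<noteq> {..<n} \<and> 1 \<le> i \<and> i \<le> k a}"
  have VBC: "VB \<subseteq> C"
  proof
    fix u assume "u \<in> VB"
    then obtain a i where ai: "u = (a,i)" and a: "a \<subseteq> {..<n}" "a \<noteq> {}" "a \<noteq> {..<n}"
      "1 \<le> i" "i \<le> k a" unfolding VB_def by blast
    show "u \<in> C" unfolding ai carr using a by simp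
  qed
  have VBeq: "zd_vertices C blowup_bot (blowup_zm n k) = VB"
  proof
    show "zd_vertices C blowup_bot (blowup_zm n k) \<subseteq> VB"
    proof
      fix u assume "u \<in> zd_vertices C blowup_bot (blowup_zm n k)"
      then obtain v where u: "u \<in> C" "u \<noteq> blowup_bot" and v: "v \<in> C" "v \<noteq> blowup_bot"
        and zm: "blowup_zm n k u v" unfolding zd_vertices_def by blast
      obtain a i where ai: "u = (a,i)" by (cases u)
      obtain b j where bj: "v = (b,j)" by (cases v)
      have dj: "a \<inter> b = {}" using zmB[OF u(1) v(1)] zm ai bj by simp
      have a: "a \<subseteq> {..<n}" "a \<noteq> {}" using u ai carr unfolding blowup_bot_def by auto
      have b: "b \<subseteq> {..<n}" "b \<noteq> {}" using v bj carr unfolding blowup_bot_def by auto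
      have "a \<noteq> {..<n}" using dj b by blast
      thus "u \<in> VB" using a u ai carr unfolding VB_def by auto
    qed
  next
    show "VB \<subseteq> zd_vertices C blowup_bot (blowup_zm n k)"
    proof
      fix u assume uV: "u \<in> VB"
      then obtain a i where ai: "u = (a,i)" and a: "a \<subseteq> {..<n}" "a \<noteq> {}" "a \<noteq> {..<n}"
        unfolding VB_def by blast
      have uC: "u \<in> C" using uV VBC by blast
      define v where "v = ({..<n} - a, 1::nat)"
      have vC: "v \<in> C" unfolding v_def using carr k1[of "{..<n} - a"] by auto
      have vne: "v \<noteq> blowup_bot" using a unfolding v_def blowup_bot_def by auto
      have "blowup_zm n k u v" using zmB[OF uC vC] ai v_def by auto
      moreover have "u \<noteq> blowup_bot" using ai a unfolding blowup_bot_def by auto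
      ultimately show "u \<in> zd_vertices C blowup_bot (blowup_zm n k)"
        unfolding zd_vertices_def using uC vC vne by blast
    qed
  qed
  define g where "g a = (SOME h. bij_betw h {y. \<phi> y = a} {1..k a})" for a
  have gb: "bij_betw (g a) {y. \<phi> y = a} {1..k a}" for a
  proof -
    have "\<exists>h. bij_betw h {y. \<phi> y = a} {1..k a}"
      by (rule finite_same_card_bij) (auto simp: k_def)
    thus ?thesis unfolding g_def by (rule someI_ex)
  qed
  define f where "f x = (\<phi> x, g (\<phi> x) x)" for x
  define VLs where "VLs = {x. \<phi> x \<noteq> {} \<and> \<phi> x \<noteq> {..<n}}"
  have fbij: "bij_betw f VLs VB"
  proof (rule bij_betw_imageI)
    show "inj_on f VLs"
    proof (rule inj_onI)
      fix x y assume "f x = f y"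
      hence eq: "\<phi> x = \<phi> y" "g (\<phi> x) x = g (\<phi> x) y" unfolding f_def by auto
      have "inj_on (g (\<phi> x)) {z. \<phi> z = \<phi> x}" using gb[of "\<phi> x"] unfolding bij_betw_def by (rule conjunct1)
      moreover have "x \<in> {z. \<phi> z = \<phi> x}" "y \<in> {z. \<phi> z = \<phi> x}" using eq(1) by simp_all
      ultimately show "x = y" using eq(2) by (meson inj_onD)
    qed
  next
    show "f ` VLs = VB"
    proof
      show "f ` VLs \<subseteq> VB"
      proof
        fix u assume "u \<in> f ` VLs"
        then obtain x where x: "x \<in> VLs" "u = f x" by blast
        have "g (\<phi> x) x \<in> {1..k (\<phi> x)}" using bij_betwE[OF gb[of "\<phi> x"]] by simp
        moreover have "\<phi> x \<subseteq> {..<n}" using phiimg by blast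
        ultimately show "u \<in> VB" using x unfolding VB_def VLs_def f_def by auto
      qed
    next
      show "VB \<subseteq> f ` VLs"
      proof
        fix u assume "u \<in> VB"
        then obtain a i where ai: "u = (a,i)" and a: "a \<subseteq> {..<n}" "a \<noteq> {}" "a \<noteq> {..<n}"
          and i: "i \<in> {1..k a}" unfolding VB_def by auto
        have "g a ` {y. \<phi> y = a} = {1..k a}" using gb[of a] unfolding bij_betw_def by (rule conjunct2)
        hence "i \<in> g a ` {y. \<phi> y = a}" using i by simp
        then obtain y where y: "\<phi> y = a" "g a y = i" by blast
        have "y \<in> VLs" using y a unfolding VLs_def by auto
        moreover have "f y = u" using y ai unfolding f_def by simp
        ultimately show "u \<in> f ` VLs" by blast
      qed
    qed
  qed
  have iso: "zd_graph_iso (UNIV :: 'a set) bot lat_zm C blowup_bot (blowup_zm n k)"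
    unfolding zd_graph_iso_def VL VBeq VLs_def[symmetric]
  proof (intro exI[of _ f] conjI ballI)
    show "bij_betw f VLs VB" by (rule fbij)
  next
    fix x y assume x: "x \<in> VLs" and y: "y \<in> VLs"
    have "f x \<in> VB" "f y \<in> VB" using bij_betwE[OF fbij] x y by simp_all
    hence fx: "f x \<in> C" "f y \<in> C" using VBC by blast+
    have "zd_adj lat_zm x y \<longleftrightarrow> \<phi> x \<inter> \<phi> y = {}"
      unfolding zd_adj_def zmL using x unfolding VLs_def by auto
    moreover have "zd_adj (blowup_zm n k) (f x) (f y) \<longleftrightarrow> \<phi> x \<inter> \<phi> y = {}"
      unfolding zd_adj_def zmB[OF fx] using x unfolding VLs_def f_def by auto
    ultimately show "zd_adj lat_zm x y \<longleftrightarrow> zd_adj (blowup_zm n k) (f x) (f y)" by simp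
  qed
  show ?thesis
  proof (intro exI[of _ k] conjI allI impI exI[of _ \<phi>])
    fix a :: "nat set" assume "a \<subseteq> {..<n} \<and> a \<noteq> {} \<and> a \<noteq> {..<n}"
    thus "1 \<le> k a" using k1 by blast
  next
    fix x y show "\<phi> x = \<phi> y \<longleftrightarrow> perp_equiv x y" by (rule phieq)
  next
    show "range \<phi> = Pow {..<n}" by (rule phiimg)
  next
    fix x y show "\<phi> x \<subseteq> \<phi> y \<longleftrightarrow> perp y \<subseteq> perp x" by (rule phiperp)
  next
    fix x show "k (\<phi> x) = card {y. perp_equiv y x}" by (rule kcard)
  next
    show "zd_graph_iso (UNIV :: 'a set) bot lat_zm (blowup_carrier n k) blowup_bot (blowup_zm n k)"
      using iso C_def by simp
  qed
qed

end
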